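(* Let $C$ be a d-cone and let $C^*$ be the cone of all Scott-continuous linear functionals $\mu\colon C\to\overline{\mathbb{R}}_+$ (with pointwise operations), endowed with the weak$^*$ upper topology. Let $C_0$ be a d-dense subcone of $C$. Then for every sublinear functional $\varphi\colon C^*\to\overline{\mathbb{R}}_+$ which is lower semicontinuous with respect to the weak$^*$ upper topology and every $\mu\in C^*$, \[\varphi(\mu)=\sup\{\mu(x)\mid x\in C_0,\ \widehat x\le\varphi\},\] where $\widehat x\le\varphi$ means $\nu(x)\le\varphi(\nu)$ for all $\nu\in C^*$.
   Context: $\overline{\mathbb{R}}_+=[0,+\infty)\cup\{+\infty\}$ with its usual order and extended arithmetic ($r+\infty=+\infty$, $r\cdot\infty=\infty$ for $r>0$, $0\cdot\infty=0$), with the upper topology (open sets $\emptyset$, $\overline{\mathbb{R}}_+$, $]r,+\infty]$ for $r\in[0,\infty)$); lower semicontinuous means continuous for it. A cone is a commutative monoid with a scalar multiplication by $[0,\infty)$ satisfying $r(x+y)=rx+ry$, $(r+s)x=rx+sx$, $(rs)x=r(sx)$, $1x=x$, $0x=0$. A d-cone is a cone with a directed complete partial order such that addition and scalar multiplication $[0,\infty)\times C\to C$ are Scott-continuous (order preserving and preserving suprema of directed families). A d-subcone is a subcone closed under directed suprema in $C$; a subcone $C_0$ is d-dense if the only d-subcone of $C$ containing $C_0$ is $C$. Linear = additive and homogeneous ($\mu(rx)=r\mu(x)$, $r\in[0,\infty)$); sublinear = homogeneous and subadditive. For $x\in C$, $\widehat x\colon C^*\to\overline{\mathbb{R}}_+$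 is $\widehat x(\mu)=\mu(x)$. The weak$^*$ upper topology on $C^*$ is the coarsest topology making every $\widehat x$, $x\in C$, lower semicontinuous. $\sup\emptyset=0$. *)

theory Defs
  imports "HOL-Analysis.Analysis"
begin

definition directed :: "('a \<Rightarrow> 'a \<Rightarrow> bool) \<Rightarrow> 'a set \<Rightarrow> bool" where
  "directed le D \<longleftrightarrow> D \<noteq> {} \<and> (\<forall>x\<in>D. \<forall>y\<in>D. \<exists>z\<in>D. le x z \<and> le y z)"

definition lub_in :: "'a set \<Rightarrow> ('a \<Rightarrow> 'a \<Rightarrow> bool) \<Rightarrow> 'a set \<Rightarrow> 'a \<Rightarrow> bool" where
  "lub_in A le D s \<longleftrightarrow> s \<in> A \<and> (\<forall>x\<in>D. le x s) \<and>
     (\<forall>u\<in>A. (\<forall>x\<in>D. le x u) \<longrightarrow> le s u)"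

definition dsup :: "('a \<Rightarrow> 'a \<Rightarrow> bool) \<Rightarrow> 'a set \<Rightarrow> 'a" where
  "dsup le D = (THE s. lub_in UNIV le D s)"

definition dcpo :: "('a \<Rightarrow> 'a \<Rightarrow> bool) \<Rightarrow> bool" where
  "dcpo le \<longleftrightarrow> (\<forall>x. le x x) \<and> (\<forall>x y. le x y \<longrightarrow> le y x \<longrightarrow> x = y) \<and>
     (\<forall>x y z. le x y \<longrightarrow> le y z \<longrightarrow> le x z) \<and>
     (\<forall>D. directed le D \<longrightarrow> (\<exists>s. lub_in UNIV le D s))"

definition scott_cont_on ::
  "'a set \<Rightarrow> ('a \<Rightarrow> 'a \<Rightarrow> bool) \<Rightarrow> ('b \<Rightarrow> 'b \<Rightarrow> bool) \<Rightarrow> ('a \<Rightarrow> 'b) \<Rightarrow> bool" where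
  "scott_cont_on A leA leB f \<longleftrightarrow>
     (\<forall>x\<in>A. \<forall>y\<in>A. leA x y \<longrightarrow> leB (f x) (f y)) \<and>
     (\<forall>D s. D \<subseteq> A \<and> directed leA D \<and> lub_in A leA D s \<longrightarrow> lub_in UNIV leB (f ` D) (f s))"

definition prod_le :: "('a \<Rightarrow> 'a \<Rightarrow> bool) \<Rightarrow> ('b \<Rightarrow> 'b \<Rightarrow> bool) \<Rightarrow> 'a \<times> 'b \<Rightarrow> 'a \<times> 'b \<Rightarrow> bool" where
  "prod_le le1 le2 p q \<longleftrightarrow> le1 (fst p) (fst q) \<and> le2 (snd p) (snd q)"

(* Cones: the whole type 'a is the cone; scalars are restricted to [0,\<infinity>) *)
definition is_cone :: "('a \<Rightarrow> 'a \<Rightarrow> 'a) \<Rightarrow> 'a \<Rightarrow> (real \<Rightarrow> 'a \<Rightarrow> 'a) \<Rightarrow> bool" where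
  "is_cone add zero sm \<longleftrightarrow>
     (\<forall>x y z. add (add x y) z = add x (add y z)) \<and>
     (\<forall>x y. add x y = add y x) \<and>
     (\<forall>x. add x zero = x) \<and>
     (\<forall>r x y. r \<ge> 0 \<longrightarrow> sm r (add x y) = add (sm r x) (sm r y)) \<and>
     (\<forall>r s x. r \<ge> 0 \<longrightarrow> s \<ge> 0 \<longrightarrow> sm (r + s) x = add (sm r x) (sm s x)) \<and>
     (\<forall>r s x. r \<ge> 0 \<longrightarrow> s \<ge> 0 \<longrightarrow> sm (r * s) x = sm r (sm s x)) \<and>
     (\<forall>x. sm 1 x = x) \<and>
     (\<forall>x. sm 0 x = zero)"

definition is_dcone ::
  "('a \<Rightarrow> 'a \<Rightarrow> 'a) \<Rightarrow> 'a \<Rightarrow> (real \<Rightarrow> 'a \<Rightarrow> 'a) \<Rightarrow> ('a \<Rightarrow> 'a \<Rightarrow> bool) \<Rightarrow> bool" where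
  "is_dcone add zero sm le \<longleftrightarrow>
     is_cone add zero sm \<and> dcpo le \<and>
     scott_cont_on UNIV (prod_le le le) le (\<lambda>p. add (fst p) (snd p)) \<and>
     scott_cont_on ({r. r \<ge> 0} \<times> UNIV) (prod_le (\<le>) le) le (\<lambda>p. sm (fst p) (snd p))"

definition is_subcone ::
  "('a \<Rightarrow> 'a \<Rightarrow> 'a) \<Rightarrow> 'a \<Rightarrow> (real \<Rightarrow> 'a \<Rightarrow> 'a) \<Rightarrow> 'a set \<Rightarrow> bool" where
  "is_subcone add zero sm S \<longleftrightarrow> zero \<in> S \<and>
     (\<forall>x\<in>S. \<forall>y\<in>S. add x y \<in> S) \<and> (\<forall>r x. r \<ge> 0 \<longrightarrow> x \<in> S \<longrightarrow> sm r x \<in> S)"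

definition is_dsubcone ::
  "('a \<Rightarrow> 'a \<Rightarrow> 'a) \<Rightarrow> 'a \<Rightarrow> (real \<Rightarrow> 'a \<Rightarrow> 'a) \<Rightarrow> ('a \<Rightarrow> 'a \<Rightarrow> bool) \<Rightarrow> 'a set \<Rightarrow> bool" where
  "is_dsubcone add zero sm le S \<longleftrightarrow> is_subcone add zero sm S \<and>
     (\<forall>D. D \<subseteq> S \<and> directed le D \<longrightarrow> dsup le D \<in> S)"

definition d_dense ::
  "('a \<Rightarrow> 'a \<Rightarrow> 'a) \<Rightarrow> 'a \<Rightarrow> (real \<Rightarrow> 'a \<Rightarrow> 'a) \<Rightarrow> ('a \<Rightarrow> 'a \<Rightarrow> bool) \<Rightarrow> 'a set \<Rightarrow> bool" where
  "d_dense add zero sm le C0 \<longleftrightarrow>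
     (\<forall>S. is_dsubcone add zero sm le S \<and> C0 \<subseteq> S \<longrightarrow> S = UNIV)"

definition linear_fun ::
  "('a \<Rightarrow> 'a \<Rightarrow> 'a) \<Rightarrow> (real \<Rightarrow> 'a \<Rightarrow> 'a) \<Rightarrow> ('a \<Rightarrow> ennreal) \<Rightarrow> bool" where
  "linear_fun add sm \<mu> \<longleftrightarrow> (\<forall>x y. \<mu> (add x y) = \<mu> x + \<mu> y) \<and>
     (\<forall>r x. r \<ge> 0 \<longrightarrow> \<mu> (sm r x) = ennreal r * \<mu> x)"

definition dual_cone ::
  "('a \<Rightarrow> 'a \<Rightarrow> 'a) \<Rightarrow> (real \<Rightarrow> 'a \<Rightarrow> 'a) \<Rightarrow> ('a \<Rightarrow> 'a \<Rightarrow> bool) \<Rightarrow> ('a \<Rightarrow> ennreal) set" where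
  "dual_cone add sm le = {\<mu>. linear_fun add sm \<mu> \<and> scott_cont_on UNIV le (\<le>) \<mu>}"

definition upper_topology :: "ennreal topology" where
  "upper_topology = topology_generated_by (insert UNIV {{ennreal r<..} | r. r \<ge> 0})"

(* Weak* upper topology on Cstar: coarsest topology on Cstar making every \<mu> \<mapsto> \<mu> x
   lower semicontinuous, i.e. generated by Cstar and the preimages {\<mu>\<in>Cstar. r < \<mu> x} *)
definition weak_star_upper ::
  "('a \<Rightarrow> 'a \<Rightarrow> 'a) \<Rightarrow> (real \<Rightarrow> 'a \<Rightarrow> 'a) \<Rightarrow> ('a \<Rightarrow> 'a \<Rightarrow> bool) \<Rightarrow> ('a \<Rightarrow> ennreal) topology" where
  "weak_star_upper add sm le = topology_generated_by
     (insert (dual_cone add sm le)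
        {{\<mu> \<in> dual_cone add sm le. ennreal r < \<mu> x} | x r. r \<ge> 0})"

definition sublinear_on_dual ::
  "('a \<Rightarrow> 'a \<Rightarrow> 'a) \<Rightarrow> (real \<Rightarrow> 'a \<Rightarrow> 'a) \<Rightarrow> ('a \<Rightarrow> 'a \<Rightarrow> bool) \<Rightarrow> (('a \<Rightarrow> ennreal) \<Rightarrow> ennreal) \<Rightarrow> bool" where
  "sublinear_on_dual add sm le \<phi> \<longleftrightarrow>
     (\<forall>\<mu>\<in>dual_cone add sm le. \<forall>r::real. r \<ge> 0 \<longrightarrow>
        \<phi> (\<lambda>x. ennreal r * \<mu> x) = ennreal r * \<phi> \<mu>) \<and>
     (\<forall>\<mu>\<in>dual_cone add sm le. \<forall>\<nu>\<in>dual_cone add sm le.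
        \<phi> (\<lambda>x. \<mu> x + \<nu> x) \<le> \<phi> \<mu> + \<phi> \<nu>)"

end

theory Submission
  imports Defs
begin


lemma lub_ennreal: "lub_in UNIV (\<le>) A (s::ennreal) \<longleftrightarrow> s = Sup A"
  unfolding lub_in_def by (auto intro: Sup_upper Sup_least antisym)

lemma dsup_lub:
  assumes "dcpo le" "directed le A"
  shows "lub_in UNIV le A (dsup le A)"
proof -
  have ex: "\<forall>D. directed le D \<longrightarrow> (\<exists>s. lub_in UNIV le D s)"
    using assms(1) unfolding dcpo_def by (elim conjE) assumption
  have anti: "\<forall>x y. le x y \<longrightarrow> le y x \<longrightarrow> x = y"
    using assms(1) unfolding dcpo_def by (elim conjE) assumption
  obtain s where s: "lub_in UNIV le A s" using ex assms(2) by blast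
  have uniq: "t = s" if t: "lub_in UNIV le A t" for t
  proof -
    have "le s t" using s t unfolding lub_in_def by blast
    moreover have "le t s" using s t unfolding lub_in_def by blast
    ultimately show ?thesis using anti by blast
  qed
  show ?thesis unfolding dsup_def by (rule theI[of _ s]) (fact s, fact uniq)
qed

lemma dual_lin:
  assumes "\<mu> \<in> dual_cone add sm le"
  shows "\<mu> (add x y) = \<mu> x + \<mu> y" "r \<ge> 0 \<Longrightarrow> \<mu> (sm r x) = ennreal r * \<mu> x"
  using assms unfolding dual_cone_def linear_fun_def by auto

lemma dual_mono:
  assumes "\<mu> \<in> dual_cone add sm le" "le x y"
  shows "\<mu> x \<le> \<mu> y"
  using assms unfolding dual_cone_def scott_cont_on_def by auto

lemma dual_dsup:
  assumes "\<mu> \<in> dual_cone add sm le" "dcpo le" "directed le A"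
  shows "\<mu> (dsup le A) = Sup (\<mu> ` A)"
  using assms dsup_lub[OF assms(2,3)] unfolding dual_cone_def scott_cont_on_def lub_ennreal
  by blast

lemma D_scale:
  assumes "\<mu> \<in> dual_cone add sm le" "c \<ge> 0"
  shows "(\<lambda>x. ennreal c * \<mu> x) \<in> dual_cone add sm le"
proof -
  have lin: "linear_fun add sm \<mu>" and sc: "scott_cont_on UNIV le (\<le>) \<mu>"
    using assms unfolding dual_cone_def by auto
  have "linear_fun add sm (\<lambda>x. ennreal c * \<mu> x)"
    using lin unfolding linear_fun_def by (simp add: distrib_left mult.left_commute)
  moreover have "scott_cont_on UNIV le (\<le>) (\<lambda>x. ennreal c * \<mu> x)"
    using sc unfolding scott_cont_on_def lub_ennreal
    by (auto intro: mult_left_mono simp: SUP_mult_left_ennreal image_image)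
  ultimately show ?thesis unfolding dual_cone_def by auto
qed

lemma D_add:
  assumes "\<mu> \<in> dual_cone add sm le" "\<nu> \<in> dual_cone add sm le"
  shows "(\<lambda>x. \<mu> x + \<nu> x) \<in> dual_cone add sm le"
proof -
  have lin: "linear_fun add sm \<mu>" "linear_fun add sm \<nu>" and sc: "scott_cont_on UNIV le (\<le>) \<mu>"
     "scott_cont_on UNIV le (\<le>) \<nu>"
    using assms unfolding dual_cone_def by auto
  have "linear_fun add sm (\<lambda>x. \<mu> x + \<nu> x)"
    using lin unfolding linear_fun_def by (simp add: distrib_left add_ac)
  moreover have "scott_cont_on UNIV le (\<le>) (\<lambda>x. \<mu> x + \<nu> x)"
    unfolding scott_cont_on_def lub_ennreal
  proof (intro conjI allI impI ballI)
    fix x y assume "le x y" then show "\<mu> x + \<nu> x \<le> \<mu> y + \<nu> y"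
      using sc unfolding scott_cont_on_def by (auto intro: add_mono)
  next
    fix A s assume a: "A \<subseteq> UNIV \<and> directed le A \<and> lub_in UNIV le A s"
    have "\<mu> s = Sup (\<mu> ` A)" "\<nu> s = Sup (\<nu> ` A)"
      using a sc unfolding scott_cont_on_def lub_ennreal by blast+
    moreover have "(SUP i\<in>A. \<mu> i + \<nu> i) = (SUP i\<in>A. \<mu> i) + (SUP i\<in>A. \<nu> i)"
    proof (rule SUP_add_directed_ennreal)
      fix i j assume "i \<in> A" "j \<in> A"
      then obtain k where "k \<in> A" "le i k" "le j k" using a unfolding directed_def by blast
      moreover have "\<mu> i \<le> \<mu> k" "\<nu> j \<le> \<nu> k"
        using sc \<open>le i k\<close> \<open>le j k\<close> unfolding scott_cont_on_def by auto
      ultimately show "\<exists>k\<in>A. \<mu> i + \<nu> j \<le> \<mu> k + \<nu> k"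
        by (intro bexI[of _ k] add_mono) auto
    qed
    ultimately show "\<mu> s + \<nu> s = Sup ((\<lambda>x. \<mu> x + \<nu> x) ` A)" by simp
  qed
  ultimately show ?thesis unfolding dual_cone_def by auto
qed

lemma ennreal_less_mult_iff:
  assumes "s > 0" "r \<ge> 0"
  shows "ennreal r < ennreal s * t \<longleftrightarrow> ennreal (r/s) < t"
proof (cases t)
  case (real u)
  then have "ennreal s * t = ennreal (s*u)" using assms by (simp add: ennreal_mult)
  have su: "s * u \<ge> 0" using assms real by simp
  have "ennreal r < ennreal s * t \<longleftrightarrow> r < s * u"
    using \<open>ennreal s * t = ennreal (s*u)\<close> ennreal_less_iff[OF assms(2)] by simp
  also have "\<dots> \<longleftrightarrow> r / s < u" using pos_divide_less_eq[OF assms(1)] by (simp add: mult.commute)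
  also have "\<dots> \<longleftrightarrow> ennreal (r/s) < t" using real ennreal_less_iff[of "r/s" u] assms by simp
  finally show ?thesis .
next
  case top
  then show ?thesis using assms by (simp add: ennreal_mult_top)
qed

lemma ennreal_add_strict:
  fixes a b c d :: ennreal
  assumes "a < b" "c < d" shows "a + c < b + d"
  using assms by (rule add_strict_mono)



definition nbhd :: "('a \<Rightarrow> ennreal) set \<Rightarrow> ('a \<times> real) set \<Rightarrow> ('a \<Rightarrow> ennreal) set" where
  "nbhd D F = {\<nu>\<in>D. \<forall>p\<in>F. ennreal (snd p) < \<nu> (fst p)}"

definition goodset :: "('a \<Rightarrow> ennreal) set \<Rightarrow> 'a set \<Rightarrow> ('a \<Rightarrow> ennreal) set \<Rightarrow> bool" where
  "goodset D C0 V \<longleftrightarrow> (\<forall>\<mu>\<in>V. \<exists>F. finite F \<and> (\<forall>p\<in>F. fst p \<in> C0 \<and> snd p \<ge> 0) \<and>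
      \<mu> \<in> nbhd D F \<and> nbhd D F \<subseteq> V)"

lemma goodsetD:
  assumes "goodset D C0 V" "\<mu> \<in> V"
  obtains F where "finite F" "\<forall>p\<in>F. fst p \<in> C0 \<and> snd p \<ge> 0" "\<mu> \<in> nbhd D F" "nbhd D F \<subseteq> V"
proof -
  have "\<exists>F. finite F \<and> (\<forall>p\<in>F. fst p \<in> C0 \<and> snd p \<ge> 0) \<and> \<mu> \<in> nbhd D F \<and> nbhd D F \<subseteq> V"
    using bspec[OF assms(1)[unfolded goodset_def] assms(2)] .
  then obtain F where "finite F" "\<forall>p\<in>F. fst p \<in> C0 \<and> snd p \<ge> 0" "\<mu> \<in> nbhd D F" "nbhd D F \<subseteq> V"
    by (elim exE conjE)
  then show thesis by (rule that)
qed

lemma nbhd_Un: "nbhd D (F1 \<union> F2) = nbhd D F1 \<inter> nbhd D F2"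
  unfolding nbhd_def ball_Un by blast

lemma good_S:
  assumes cone: "is_cone add zero sm" and dc: "dcpo le" and sub: "is_subcone add zero sm C0"
    and dd: "d_dense add zero sm le C0" and r: "r \<ge> 0"
  shows "goodset (dual_cone add sm le) C0 {\<nu>\<in>dual_cone add sm le. ennreal r < \<nu> x}"
proof -
  let ?D = "dual_cone add sm le"
  define S where "S = {x. \<forall>r\<ge>0. goodset ?D C0 {\<nu>\<in>?D. ennreal r < \<nu> x}}"
  have SD: "goodset ?D C0 {\<nu>\<in>?D. ennreal r < \<nu> x}" if "x \<in> S" "r \<ge> 0" for x r
    using that unfolding S_def by blast
  have zeroS: "zero \<in> S"
  proof -
    have "\<nu> zero = 0" if "\<nu> \<in> ?D" for \<nu>
    proof -
      have "\<forall>x. sm 0 x = zero" using cone unfolding is_cone_def by (elim conjE) assumption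
      then have "zero = sm 0 zero" by simp
      then show ?thesis using dual_lin(2)[OF that, where r=0 and x=zero] by simp
    qed
    then have z: "\<And>\<nu>. \<nu> \<in> ?D \<Longrightarrow> \<nu> zero = 0" .
    have e: "{\<nu>\<in>?D. ennreal r < \<nu> zero} = {}" for r
    proof -
      { fix \<nu> assume "\<nu> \<in> ?D" "ennreal r < \<nu> zero"
        then have False using z[of \<nu>] by simp }
      then show ?thesis by blast
    qed
    have g: "goodset ?D C0 {}" unfolding goodset_def by blast
    show ?thesis unfolding S_def mem_Collect_eq
    proof (intro allI impI)
      fix r :: real assume "r \<ge> 0"
      show "goodset ?D C0 {\<nu>\<in>?D. ennreal r < \<nu> zero}" unfolding e by (rule g)
    qed
  qed
  have addS: "add x y \<in> S" if xS: "x \<in> S" and yS: "y \<in> S" for x y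
    unfolding S_def goodset_def mem_Collect_eq
  proof (intro allI impI ballI)
    fix r :: real and \<mu> assume r: "r \<ge> 0" and mu: "\<mu> \<in> {\<nu> \<in> ?D. ennreal r < \<nu> (add x y)}"
    then have muD: "\<mu> \<in> ?D" by simp
    then have lt: "ennreal r < \<mu> x + \<mu> y" using mu dual_lin(1)[OF muD] by simp
    show "\<exists>F. finite F \<and> (\<forall>p\<in>F. fst p \<in> C0 \<and> snd p \<ge> 0) \<and> \<mu> \<in> nbhd ?D F \<and>
        nbhd ?D F \<subseteq> {\<nu> \<in> ?D. ennreal r < \<nu> (add x y)}"
    proof (cases "ennreal r < \<mu> x \<or> ennreal r < \<mu> y")
      case True
      then show ?thesis
      proof
        assume "ennreal r < \<mu> x"
        then obtain F where F: "finite F" "\<forall>p\<in>F. fst p \<in> C0 \<and> snd p \<ge> 0" "\<mu> \<in> nbhd ?D F"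
          "nbhd ?D F \<subseteq> {\<nu> \<in> ?D. ennreal r < \<nu> x}"
          using goodsetD[OF SD[OF xS r], of \<mu>] muD \<open>ennreal r < \<mu> x\<close> by blast
        have "nbhd ?D F \<subseteq> {\<nu> \<in> ?D. ennreal r < \<nu> (add x y)}"
        proof
          fix \<nu> assume "\<nu> \<in> nbhd ?D F"
          then have "\<nu> \<in> ?D" "ennreal r < \<nu> x" using F(4) by auto
          moreover have "\<nu> x \<le> \<nu> (add x y)" using dual_lin(1)[OF \<open>\<nu> \<in> ?D\<close>] by simp
          ultimately show "\<nu> \<in> {\<nu> \<in> ?D. ennreal r < \<nu> (add x y)}"
            using less_le_trans by blast
        qed
        then show ?thesis using F by blast
      next
        assume "ennreal r < \<mu> y"
        then obtain F where F: "finite F" "\<forall>p\<in>F. fst p \<in> C0 \<and> snd p \<ge> 0" "\<mu> \<in> nbhd ?D F"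
          "nbhd ?D F \<subseteq> {\<nu> \<in> ?D. ennreal r < \<nu> y}"
          using goodsetD[OF SD[OF yS r], of \<mu>] muD \<open>ennreal r < \<mu> y\<close> by blast
        have "nbhd ?D F \<subseteq> {\<nu> \<in> ?D. ennreal r < \<nu> (add x y)}"
        proof
          fix \<nu> assume "\<nu> \<in> nbhd ?D F"
          then have "\<nu> \<in> ?D" "ennreal r < \<nu> y" using F(4) by auto
          moreover have "\<nu> y \<le> \<nu> (add x y)" using dual_lin(1)[OF \<open>\<nu> \<in> ?D\<close>] by simp
          ultimately show "\<nu> \<in> {\<nu> \<in> ?D. ennreal r < \<nu> (add x y)}"
            using less_le_trans by blast
        qed
        then show ?thesis using F by blast
      qed
    next
      case False
      then have hx: "\<mu> x \<le> ennreal r" and hy: "\<mu> y \<le> ennreal r" by auto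
      obtain a where a: "\<mu> x = ennreal a" "a \<ge> 0"
        using hx by (cases "\<mu> x" rule: ennreal_cases) (auto simp: top_unique)
      obtain b where b: "\<mu> y = ennreal b" "b \<ge> 0"
        using hy by (cases "\<mu> y" rule: ennreal_cases) (auto simp: top_unique)
      have ab: "r < a + b"
      proof -
        have "ennreal r < ennreal (a + b)" using lt a b by (simp add: ennreal_plus)
        then show ?thesis using ennreal_less_iff[OF r] by simp
      qed
      have apos: "a > 0"
      proof (rule ccontr)
        assume "\<not> a > 0" then have "a = 0" using a by simp
        then show False using ab hy b r by (simp add: ennreal_le_iff)
      qed
      have bpos: "b > 0"
      proof (rule ccontr)
        assume "\<not> b > 0" then have "b = 0" using b by simp
        then show False using ab hx a r by (simp add: ennreal_le_iff)
      qed
      define a' where "a' = a * r / (a + b)"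
      define b' where "b' = b * r / (a + b)"
      have abpos: "a + b > 0" using apos bpos by simp
      have "a * r < a * (a + b)" using ab apos by (rule mult_strict_left_mono)
      then have a'a: "a' < a" unfolding a'_def using pos_divide_less_eq[OF abpos] by (simp add: mult.commute)
      have "b * r < b * (a + b)" using ab bpos by (rule mult_strict_left_mono)
      then have b'b: "b' < b" unfolding b'_def using pos_divide_less_eq[OF abpos] by (simp add: mult.commute)
      have a'0: "a' \<ge> 0" unfolding a'_def using apos bpos r by simp
      have b'0: "b' \<ge> 0" unfolding b'_def using apos bpos r by simp
      have "a' + b' = (a * r + b * r) / (a + b)" unfolding a'_def b'_def by (rule add_divide_distrib[symmetric])
      also have "\<dots> = ((a + b) * r) / (a + b)" by (simp only: distrib_right)
      also have "\<dots> = r" using abpos by simp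
      finally have sum: "a' + b' = r" .
      have "\<mu> \<in> {\<nu> \<in> ?D. ennreal a' < \<nu> x}" using muD a a'a a'0 by (simp add: ennreal_less_iff)
      then obtain F1 where F1: "finite F1" "\<forall>p\<in>F1. fst p \<in> C0 \<and> snd p \<ge> 0" "\<mu> \<in> nbhd ?D F1"
          "nbhd ?D F1 \<subseteq> {\<nu> \<in> ?D. ennreal a' < \<nu> x}"
        using goodsetD[OF SD[OF xS a'0]] by blast
      have "\<mu> \<in> {\<nu> \<in> ?D. ennreal b' < \<nu> y}" using muD b b'b b'0 by (simp add: ennreal_less_iff)
      then obtain F2 where F2: "finite F2" "\<forall>p\<in>F2. fst p \<in> C0 \<and> snd p \<ge> 0" "\<mu> \<in> nbhd ?D F2"
          "nbhd ?D F2 \<subseteq> {\<nu> \<in> ?D. ennreal b' < \<nu> y}"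
        using goodsetD[OF SD[OF yS b'0]] by blast
      have inc: "nbhd ?D (F1 \<union> F2) \<subseteq> {\<nu> \<in> ?D. ennreal r < \<nu> (add x y)}"
      proof
        fix \<nu> assume nF: "\<nu> \<in> nbhd ?D (F1 \<union> F2)"
        have n12: "\<nu> \<in> nbhd ?D F1" "\<nu> \<in> nbhd ?D F2" using nF nbhd_Un[of ?D F1 F2] by blast+
        have nD: "\<nu> \<in> ?D" using n12(1) unfolding nbhd_def by blast
        have hx': "ennreal a' < \<nu> x" using F1(4) n12(1) by blast
        have hy': "ennreal b' < \<nu> y" using F2(4) n12(2) by blast
        have "ennreal r = ennreal a' + ennreal b'"
          by (subst sum[symmetric]) (rule ennreal_plus[OF a'0 b'0])
        also have "\<dots> < \<nu> x + \<nu> y" by (rule ennreal_add_strict[OF hx' hy'])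
        also have "\<dots> = \<nu> (add x y)" using dual_lin(1)[OF nD] by simp
        finally have "ennreal r < \<nu> (add x y)" .
        then show "\<nu> \<in> {\<nu> \<in> ?D. ennreal r < \<nu> (add x y)}" using nD by blast
      qed
      have m12: "\<mu> \<in> nbhd ?D (F1 \<union> F2)" using F1(3) F2(3) nbhd_Un[of ?D F1 F2] by blast
      have f12: "finite (F1 \<union> F2)" using F1(1) F2(1) by blast
      have p12: "\<forall>p\<in>F1 \<union> F2. fst p \<in> C0 \<and> snd p \<ge> 0" using F1(2) F2(2) by blast
      show ?thesis by (rule exI[of _ "F1 \<union> F2"]) (intro conjI f12 p12 m12 inc)
    qed
  qed
  have smS: "sm s x \<in> S" if xS: "x \<in> S" and s: "s \<ge> 0" for x s
    unfolding S_def goodset_def mem_Collect_eq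
  proof (intro allI impI ballI)
    fix r :: real and \<mu> assume r: "r \<ge> 0" and mu: "\<mu> \<in> {\<nu> \<in> ?D. ennreal r < \<nu> (sm s x)}"
    then have muD: "\<mu> \<in> ?D" by simp
    then have lt: "ennreal r < ennreal s * \<mu> x" using mu dual_lin(2)[OF muD s] by simp
    then have spos: "s > 0" using s by (cases "s = 0") auto
    have eq: "ennreal r < \<nu> (sm s x) \<longleftrightarrow> ennreal (r/s) < \<nu> x" if "\<nu> \<in> ?D" for \<nu>
      using dual_lin(2)[OF that s] ennreal_less_mult_iff[OF spos r] by simp
    have "r/s \<ge> 0" using r s by simp
    then obtain F where F: "finite F" "\<forall>p\<in>F. fst p \<in> C0 \<and> snd p \<ge> 0" "\<mu> \<in> nbhd ?D F"
          "nbhd ?D F \<subseteq> {\<nu> \<in> ?D. ennreal (r/s) < \<nu> x}"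
      using goodsetD[OF SD[OF xS \<open>r/s \<ge> 0\<close>], of \<mu>] muD eq[OF muD] mu by blast
    then show "\<exists>F. finite F \<and> (\<forall>p\<in>F. fst p \<in> C0 \<and> snd p \<ge> 0) \<and> \<mu> \<in> nbhd ?D F \<and>
        nbhd ?D F \<subseteq> {\<nu> \<in> ?D. ennreal r < \<nu> (sm s x)}"
      using eq by (intro exI[of _ F]) auto
  qed
  have supS: "dsup le A \<in> S" if AS: "A \<subseteq> S" and dir: "directed le A" for A
    unfolding S_def goodset_def mem_Collect_eq
  proof (intro allI impI ballI)
    fix r :: real and \<mu> assume r: "r \<ge> 0" and mu: "\<mu> \<in> {\<nu> \<in> ?D. ennreal r < \<nu> (dsup le A)}"
    then have muD: "\<mu> \<in> ?D" and "ennreal r < Sup (\<mu> ` A)" using dual_dsup[OF _ dc dir] by auto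
    then obtain d where d: "d \<in> A" "ennreal r < \<mu> d" by (auto simp: less_Sup_iff)
    then obtain F where F: "finite F" "\<forall>p\<in>F. fst p \<in> C0 \<and> snd p \<ge> 0" "\<mu> \<in> nbhd ?D F"
          "nbhd ?D F \<subseteq> {\<nu> \<in> ?D. ennreal r < \<nu> d}"
      using goodsetD[OF SD[OF _ r], of d \<mu>] AS muD by blast
    have led: "le d (dsup le A)" using dsup_lub[OF dc dir] d(1) unfolding lub_in_def by auto
    have "nbhd ?D F \<subseteq> {\<nu> \<in> ?D. ennreal r < \<nu> (dsup le A)}"
    proof
      fix \<nu> assume "\<nu> \<in> nbhd ?D F"
      then have "\<nu> \<in> ?D" "ennreal r < \<nu> d" using F(4) by auto
      then show "\<nu> \<in> {\<nu> \<in> ?D. ennreal r < \<nu> (dsup le A)}"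
        using dual_mono[OF \<open>\<nu> \<in> ?D\<close> led] less_le_trans by blast
    qed
    then show "\<exists>F. finite F \<and> (\<forall>p\<in>F. fst p \<in> C0 \<and> snd p \<ge> 0) \<and> \<mu> \<in> nbhd ?D F \<and>
        nbhd ?D F \<subseteq> {\<nu> \<in> ?D. ennreal r < \<nu> (dsup le A)}"
      using F by blast
  qed
  have dsub: "is_dsubcone add zero sm le S"
    unfolding is_dsubcone_def is_subcone_def
  proof (intro conjI allI ballI impI)
    show "zero \<in> S" by (rule zeroS)
  next
    fix x y assume "x \<in> S" "y \<in> S" then show "add x y \<in> S" by (rule addS)
  next
    fix r :: real and x assume "0 \<le> r" "x \<in> S" then show "sm r x \<in> S" using smS by blast
  next
    fix A assume "A \<subseteq> S \<and> directed le A" then show "dsup le A \<in> S" using supS by blast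
  qed
  have C0S: "C0 \<subseteq> S"
  proof
    fix x assume x: "x \<in> C0"
    show "x \<in> S" unfolding S_def goodset_def mem_Collect_eq mem_Collect_eq
    proof (intro allI impI ballI)
      fix r :: real and \<mu> assume "r \<ge> 0" "\<mu> \<in> {\<nu> \<in> ?D. ennreal r < \<nu> x}"
      then show "\<exists>F. finite F \<and> (\<forall>p\<in>F. fst p \<in> C0 \<and> snd p \<ge> 0) \<and> \<mu> \<in> nbhd ?D F \<and>
        nbhd ?D F \<subseteq> {\<nu> \<in> ?D. ennreal r < \<nu> x}"
            using x by (intro exI[of _ "{(x,r)}"]) (auto simp: nbhd_def)
    qed
  qed
  have "S = UNIV"
    by (rule dd[unfolded d_dense_def, rule_format]) (intro conjI dsub C0S)
  then have "x \<in> S" by simp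
  then show ?thesis using SD r by blast
qed

lemma good_open:
  assumes cone: "is_cone add zero sm" and dc: "dcpo le" and sub: "is_subcone add zero sm C0"
    and dd: "d_dense add zero sm le C0"
    and op: "openin (weak_star_upper add sm le) V"
  shows "goodset (dual_cone add sm le) C0 V"
proof -
  let ?D = "dual_cone add sm le"
  have "generate_topology_on (insert ?D {{\<mu> \<in> ?D. ennreal r < \<mu> x} | x r. r \<ge> 0}) V"
    using op unfolding weak_star_upper_def openin_topology_generated_by_iff by simp
  then show ?thesis
  proof (induction rule: generate_topology_on.induct)
    case Empty
    then show ?case unfolding goodset_def by auto
  next
    case (Int a b)
    show ?case unfolding goodset_def
    proof
      fix \<mu> assume mu: "\<mu> \<in> a \<inter> b"
      obtain F1 where F1: "finite F1" "\<forall>p\<in>F1. fst p \<in> C0 \<and> snd p \<ge> 0" "\<mu> \<in> nbhd ?D F1"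
          "nbhd ?D F1 \<subseteq> a" using goodsetD[OF Int.IH(1)] mu by blast
      obtain F2 where F2: "finite F2" "\<forall>p\<in>F2. fst p \<in> C0 \<and> snd p \<ge> 0" "\<mu> \<in> nbhd ?D F2"
          "nbhd ?D F2 \<subseteq> b" using goodsetD[OF Int.IH(2)] mu by blast
      have "nbhd ?D (F1 \<union> F2) \<subseteq> a \<inter> b" using F1(4) F2(4) nbhd_Un[of ?D F1 F2] by blast
      moreover have "\<mu> \<in> nbhd ?D (F1 \<union> F2)" using F1(3) F2(3) nbhd_Un[of ?D F1 F2] by blast
      moreover have "finite (F1 \<union> F2)" using F1(1) F2(1) by blast
      moreover have "\<forall>p\<in>F1 \<union> F2. fst p \<in> C0 \<and> snd p \<ge> 0" using F1(2) F2(2) by blast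
      ultimately show "\<exists>F. finite F \<and> (\<forall>p\<in>F. fst p \<in> C0 \<and> snd p \<ge> 0) \<and> \<mu> \<in> nbhd ?D F \<and> nbhd ?D F \<subseteq> a \<inter> b"
        by blast
    qed
  next
    case (UN K)
    show ?case unfolding goodset_def
    proof
      fix \<mu> assume "\<mu> \<in> \<Union>K"
      then obtain k where k: "k \<in> K" "\<mu> \<in> k" by blast
      then obtain F where "finite F" "\<forall>p\<in>F. fst p \<in> C0 \<and> snd p \<ge> 0" "\<mu> \<in> nbhd ?D F"
          "nbhd ?D F \<subseteq> k" using goodsetD[OF UN.IH[OF k(1)] k(2)] by blast
      then show "\<exists>F. finite F \<and> (\<forall>p\<in>F. fst p \<in> C0 \<and> snd p \<ge> 0) \<and> \<mu> \<in> nbhd ?D F \<and> nbhd ?D F \<subseteq> \<Union>K"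
        using k by blast
    qed
  next
    case (Basis s)
    then show ?case
    proof
      assume "s = ?D"
      then show ?thesis unfolding goodset_def by (intro ballI exI[of _ "{}"]) (auto simp: nbhd_def)
    next
      assume "s \<in> {{\<mu> \<in> ?D. ennreal r < \<mu> x} | x r. r \<ge> 0}"
      then obtain x r where "s = {\<mu> \<in> ?D. ennreal r < \<mu> x}" "r \<ge> 0" by blast
      then show ?thesis using good_S[OF cone dc sub dd] by simp
    qed
  qed
qed



definition conv_cone :: "('a \<Rightarrow> ennreal) set \<Rightarrow> bool" where
  "conv_cone P \<longleftrightarrow> (\<forall>\<nu>1\<in>P. \<forall>\<nu>2\<in>P. (\<lambda>x. \<nu>1 x + \<nu>2 x) \<in> P) \<and>
     (\<forall>\<nu>\<in>P. \<forall>c::real. c > 0 \<longrightarrow> (\<lambda>x. ennreal c * \<nu> x) \<in> P)"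

definition subl :: "('a \<Rightarrow> ennreal) set \<Rightarrow> (('a \<Rightarrow> ennreal) \<Rightarrow> ennreal) \<Rightarrow> bool" where
  "subl P \<phi> \<longleftrightarrow> (\<forall>\<nu>\<in>P. \<forall>c::real. c > 0 \<longrightarrow> \<phi> (\<lambda>x. ennreal c * \<nu> x) = ennreal c * \<phi> \<nu>) \<and>
     (\<forall>\<nu>1\<in>P. \<forall>\<nu>2\<in>P. \<phi> (\<lambda>x. \<nu>1 x + \<nu>2 x) \<le> \<phi> \<nu>1 + \<phi> \<nu>2)"

lemma cc_add: "conv_cone P \<Longrightarrow> \<nu>1 \<in> P \<Longrightarrow> \<nu>2 \<in> P \<Longrightarrow> (\<lambda>x. \<nu>1 x + \<nu>2 x) \<in> P"
  unfolding conv_cone_def by blast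
lemma cc_scale: "conv_cone P \<Longrightarrow> \<nu> \<in> P \<Longrightarrow> c > 0 \<Longrightarrow> (\<lambda>x. ennreal c * \<nu> x) \<in> P"
  unfolding conv_cone_def by blast
lemma sl_scale: "subl P \<phi> \<Longrightarrow> \<nu> \<in> P \<Longrightarrow> c > 0 \<Longrightarrow> \<phi> (\<lambda>x. ennreal c * \<nu> x) = ennreal c * \<phi> \<nu>"
  unfolding subl_def by blast
lemma sl_add: "subl P \<phi> \<Longrightarrow> \<nu>1 \<in> P \<Longrightarrow> \<nu>2 \<in> P \<Longrightarrow> \<phi> (\<lambda>x. \<nu>1 x + \<nu>2 x) \<le> \<phi> \<nu>1 + \<phi> \<nu>2"
  unfolding subl_def by blast
lemma subl_subset: "subl P \<phi> \<Longrightarrow> K \<subseteq> P \<Longrightarrow> subl K \<phi>"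
  unfolding subl_def by blast

lemma fin_cases:
  fixes z :: ennreal
  assumes "z < top"
  obtains u where "z = ennreal u" "u \<ge> 0"
  using assms by (cases z rule: ennreal_cases) auto

lemma M2_inf:
  assumes cc: "conv_cone P" and sl: "subl P \<phi>"
    and mn: "\<forall>\<nu>\<in>P. min (\<nu> x1) (\<nu> x2) \<le> \<phi> \<nu>"
    and n0: "\<nu>0 \<in> P" "\<nu>0 x1 = top" "\<nu>0 x2 < top" "\<phi> \<nu>0 < top"
  shows "\<forall>\<omega>\<in>P. \<omega> x2 \<le> \<phi> \<omega>"
proof (intro ballI, rule ccontr)
  fix \<omega> assume w: "\<omega> \<in> P" and "\<not> \<omega> x2 \<le> \<phi> \<omega>"
  then have lt: "\<phi> \<omega> < \<omega> x2" by simp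
  have fin: "\<phi> \<omega> < top" using less_le_trans[OF lt top_greatest] .
  show False
  proof (cases "\<omega> x2 = top")
    case True
    define \<sigma> where "\<sigma> = (\<lambda>x. \<omega> x + \<nu>0 x)"
    have sP: "\<sigma> \<in> P" unfolding \<sigma>_def using cc_add[OF cc w n0(1)] .
    have "\<phi> \<sigma> \<le> \<phi> \<omega> + \<phi> \<nu>0" unfolding \<sigma>_def using sl_add[OF sl w n0(1)] .
    also have "\<dots> < top" using fin n0(4) by simp
    finally have "\<phi> \<sigma> < top" .
    moreover have "min (\<sigma> x1) (\<sigma> x2) = top" unfolding \<sigma>_def using True n0(2) by simp
    moreover have "min (\<sigma> x1) (\<sigma> x2) \<le> \<phi> \<sigma>" using mn sP by blast
    ultimately show False by simp
  next
    case False
    then have "\<omega> x2 < top" by (simp add: top.not_eq_extremum)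
    then obtain B where B: "\<omega> x2 = ennreal B" "B \<ge> 0" by (rule fin_cases)
    obtain Phi where Phi: "\<phi> \<omega> = ennreal Phi" "Phi \<ge> 0" using fin by (rule fin_cases)
    obtain b0 where b0: "\<nu>0 x2 = ennreal b0" "b0 \<ge> 0" using n0(3) by (rule fin_cases)
    obtain p0 where p0: "\<phi> \<nu>0 = ennreal p0" "p0 \<ge> 0" using n0(4) by (rule fin_cases)
    have PB: "Phi < B" using lt B Phi by (simp add: ennreal_less_iff)
    define e where "e = (B - Phi) / (p0 + 1)"
    have epos: "e > 0" unfolding e_def using PB p0 by simp
    have ep: "e * p0 < B - Phi"
    proof -
      have "e * p0 = (B - Phi) * (p0 / (p0 + 1))" unfolding e_def by simp
      also have "\<dots> < (B - Phi) * 1" using PB p0 by (intro mult_strict_left_mono) auto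
      finally show ?thesis by simp
    qed
    define \<sigma> where "\<sigma> = (\<lambda>x. \<omega> x + ennreal e * \<nu>0 x)"
    have eP: "(\<lambda>x. ennreal e * \<nu>0 x) \<in> P" using cc_scale[OF cc n0(1) epos] .
    have sP: "\<sigma> \<in> P" unfolding \<sigma>_def using cc_add[OF cc w eP] .
    have "\<phi> \<sigma> \<le> \<phi> \<omega> + \<phi> (\<lambda>x. ennreal e * \<nu>0 x)" unfolding \<sigma>_def using sl_add[OF sl w eP] .
    also have "\<dots> = ennreal (Phi + e * p0)"
      using sl_scale[OF sl n0(1) epos] Phi p0 epos by (simp add: ennreal_plus ennreal_mult)
    finally have s1: "\<phi> \<sigma> \<le> ennreal (Phi + e * p0)" .
    have x1: "\<sigma> x1 = top" unfolding \<sigma>_def using n0(2) epos by (simp add: ennreal_mult_top)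
    have x2: "\<sigma> x2 = ennreal (B + e * b0)" unfolding \<sigma>_def using B b0 epos
      by (simp add: ennreal_plus ennreal_mult)
    have "min (\<sigma> x1) (\<sigma> x2) = ennreal (B + e * b0)" using x1 x2 by simp
    moreover have "min (\<sigma> x1) (\<sigma> x2) \<le> \<phi> \<sigma>" using mn sP by blast
    ultimately have "ennreal (B + e * b0) \<le> ennreal (Phi + e * p0)" using s1 by simp
    moreover have "0 \<le> Phi + e * p0" using Phi p0 epos by simp
    ultimately have "B + e * b0 \<le> Phi + e * p0" using ennreal_le_iff by blast
    moreover have "e * b0 \<ge> 0" using epos b0 by simp
    ultimately show False using ep by simp
  qed
qed

lemma M2:
  assumes cc: "conv_cone P" and sl: "subl P \<phi>"
    and mn: "\<forall>\<nu>\<in>P. min (\<nu> x1) (\<nu> x2) \<le> \<phi> \<nu>"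
  shows "\<exists>t. 0 \<le> t \<and> t \<le> 1 \<and> (\<forall>\<nu>\<in>P. ennreal t * \<nu> x1 + ennreal (1-t) * \<nu> x2 \<le> \<phi> \<nu>)"
proof -
  have mn': "\<forall>\<nu>\<in>P. min (\<nu> x2) (\<nu> x1) \<le> \<phi> \<nu>" using mn by (simp add: min.commute)
  consider (A) "\<exists>\<nu>0\<in>P. \<nu>0 x1 = top \<and> \<nu>0 x2 < top \<and> \<phi> \<nu>0 < top"
    | (B) "\<exists>\<nu>0\<in>P. \<nu>0 x2 = top \<and> \<nu>0 x1 < top \<and> \<phi> \<nu>0 < top"
    | (C) "\<not> (\<exists>\<nu>0\<in>P. \<nu>0 x1 = top \<and> \<nu>0 x2 < top \<and> \<phi> \<nu>0 < top)"
          "\<not> (\<exists>\<nu>0\<in>P. \<nu>0 x2 = top \<and> \<nu>0 x1 < top \<and> \<phi> \<nu>0 < top)" by blast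
  then show ?thesis
  proof cases
    case A
    then obtain \<nu>0 where "\<nu>0 \<in> P" "\<nu>0 x1 = top" "\<nu>0 x2 < top" "\<phi> \<nu>0 < top" by blast
    from M2_inf[OF cc sl mn this] have "\<forall>\<omega>\<in>P. \<omega> x2 \<le> \<phi> \<omega>" .
    then show ?thesis by (intro exI[of _ 0]) simp
  next
    case B
    then obtain \<nu>0 where "\<nu>0 \<in> P" "\<nu>0 x2 = top" "\<nu>0 x1 < top" "\<phi> \<nu>0 < top" by blast
    from M2_inf[OF cc sl mn' this] have "\<forall>\<omega>\<in>P. \<omega> x1 \<le> \<phi> \<omega>" .
    then show ?thesis by (intro exI[of _ 1]) simp
  next
    case C
    have fin: "\<nu> x1 < top \<and> \<nu> x2 < top" if nP: "\<nu> \<in> P" and pf: "\<phi> \<nu> < top" for \<nu>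
    proof -
      have m: "min (\<nu> x1) (\<nu> x2) < top" using mn nP pf le_less_trans by blast
      show ?thesis
      proof (rule ccontr)
        assume "\<not> (\<nu> x1 < top \<and> \<nu> x2 < top)"
        then have "\<nu> x1 = top \<or> \<nu> x2 = top" by (metis less_top)
        then show False
        proof
          assume h: "\<nu> x1 = top"
          then have "\<nu> x2 < top" using m by simp
          then show False using C(1) nP h pf by blast
        next
          assume h: "\<nu> x2 = top"
          then have "\<nu> x1 < top" using m by simp
          then show False using C(2) nP h pf by blast
        qed
      qed
    qed
    define f where "f \<nu> = enn2real (\<nu> x1)" for \<nu> :: "'a \<Rightarrow> ennreal"
    define g where "g \<nu> = enn2real (\<nu> x2)" for \<nu> :: "'a \<Rightarrow> ennreal"
    define p where "p \<nu> = enn2real (\<phi> \<nu>)" for \<nu> :: "'a \<Rightarrow> ennreal"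
    define Pf where "Pf = {\<nu>\<in>P. \<phi> \<nu> < top}"
    have fe: "\<nu> x1 = ennreal (f \<nu>)" "\<nu> x2 = ennreal (g \<nu>)" "\<phi> \<nu> = ennreal (p \<nu>)"
      "f \<nu> \<ge> 0" "g \<nu> \<ge> 0" "p \<nu> \<ge> 0" if "\<nu> \<in> Pf" for \<nu>
      using that fin unfolding Pf_def f_def g_def p_def by auto
    have disj: "f \<nu> \<le> p \<nu> \<or> g \<nu> \<le> p \<nu>" if "\<nu> \<in> Pf" for \<nu>
    proof -
      have "\<nu> x1 \<le> \<phi> \<nu> \<or> \<nu> x2 \<le> \<phi> \<nu>" using mn that unfolding Pf_def by (auto simp: min_le_iff_disj)
      then show ?thesis using fe[OF that] ennreal_le_iff by metis
    qed
    have key: "b * g \<nu>1 + a * g \<nu>2 \<le> b * p \<nu>1 + a * p \<nu>2"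
      if n1: "\<nu>1 \<in> Pf" and n2: "\<nu>2 \<in> Pf" and a: "a = f \<nu>1 - g \<nu>1" "a > 0"
        and b: "b = g \<nu>2 - f \<nu>2" "b > 0" for \<nu>1 \<nu>2 a b
    proof -
      have P1: "\<nu>1 \<in> P" and P2: "\<nu>2 \<in> P" using n1 n2 unfolding Pf_def by auto
      have s1: "(\<lambda>x. ennreal b * \<nu>1 x) \<in> P" using cc_scale[OF cc P1 b(2)] .
      have s2: "(\<lambda>x. ennreal a * \<nu>2 x) \<in> P" using cc_scale[OF cc P2 a(2)] .
      define \<omega> where "\<omega> = (\<lambda>x. ennreal b * \<nu>1 x + ennreal a * \<nu>2 x)"
      have wP: "\<omega> \<in> P" unfolding \<omega>_def using cc_add[OF cc s1 s2] .
      have "\<phi> \<omega> \<le> \<phi> (\<lambda>x. ennreal b * \<nu>1 x) + \<phi> (\<lambda>x. ennreal a * \<nu>2 x)"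
        unfolding \<omega>_def using sl_add[OF sl s1 s2] .
      also have "\<dots> = ennreal (b * p \<nu>1 + a * p \<nu>2)"
        using sl_scale[OF sl P1 b(2)] sl_scale[OF sl P2 a(2)] fe[OF n1] fe[OF n2] a(2) b(2)
        by (simp add: ennreal_plus ennreal_mult)
      finally have ph: "\<phi> \<omega> \<le> ennreal (b * p \<nu>1 + a * p \<nu>2)" .
      have w2: "\<omega> x2 = ennreal (b * g \<nu>1 + a * g \<nu>2)"
        unfolding \<omega>_def using fe[OF n1] fe[OF n2] a(2) b(2) by (simp add: ennreal_plus ennreal_mult)
      have w1: "\<omega> x1 = ennreal (b * f \<nu>1 + a * f \<nu>2)"
        unfolding \<omega>_def using fe[OF n1] fe[OF n2] a(2) b(2) by (simp add: ennreal_plus ennreal_mult)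
      have "b * f \<nu>1 + a * f \<nu>2 = b * g \<nu>1 + a * g \<nu>2"
        by (simp add: a(1) b(1) algebra_simps)
      then have "min (\<omega> x1) (\<omega> x2) = ennreal (b * g \<nu>1 + a * g \<nu>2)" using w1 w2 by simp
      then have "ennreal (b * g \<nu>1 + a * g \<nu>2) \<le> ennreal (b * p \<nu>1 + a * p \<nu>2)"
        using mn wP ph by (metis order_trans)
      moreover have "0 \<le> b * p \<nu>1 + a * p \<nu>2" using fe[OF n1] fe[OF n2] a(2) b(2) by simp
      ultimately show ?thesis using ennreal_le_iff by blast
    qed
    define L where "L = {(g \<nu> - p \<nu>) / (g \<nu> - f \<nu>) | \<nu>. \<nu> \<in> Pf \<and> f \<nu> < g \<nu>}"
    define t where "t = Sup (insert 0 L)"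
    have L1: "l \<le> 1" if "l \<in> insert 0 L" for l
    proof -
      have "l = 0 \<or> (\<exists>\<nu>. \<nu> \<in> Pf \<and> f \<nu> < g \<nu> \<and> l = (g \<nu> - p \<nu>) / (g \<nu> - f \<nu>))"
        using that unfolding L_def insert_iff mem_Collect_eq by blast
      then consider "l = 0" | \<nu> where "\<nu> \<in> Pf" "f \<nu> < g \<nu>" "l = (g \<nu> - p \<nu>) / (g \<nu> - f \<nu>)"
        by blast
      then show ?thesis
      proof cases
        case 2
        then have "f \<nu> \<le> p \<nu>" using disj by force
        then have "g \<nu> - p \<nu> \<le> g \<nu> - f \<nu>" by simp
        then show ?thesis using 2 divide_le_eq_1_pos[of "g \<nu> - f \<nu>" "g \<nu> - p \<nu>"] by simp
      qed simp
    qed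
    have bdd: "bdd_above (insert 0 L)" using L1 by (intro bdd_aboveI[where M=1]) auto
    have t0: "0 \<le> t" unfolding t_def using bdd by (intro cSup_upper) auto
    have t1: "t \<le> 1" unfolding t_def using L1 by (intro cSup_least) auto
    have tl: "l \<le> t" if "l \<in> L" for l unfolding t_def using bdd that by (intro cSup_upper) auto
    have tu: "t \<le> (p \<nu>1 - g \<nu>1) / (f \<nu>1 - g \<nu>1)" if n1: "\<nu>1 \<in> Pf" and gf: "g \<nu>1 < f \<nu>1" for \<nu>1
      unfolding t_def
    proof (rule cSup_least)
      fix l assume lm: "l \<in> insert 0 L"
      have "l = 0 \<or> (\<exists>\<nu>. \<nu> \<in> Pf \<and> f \<nu> < g \<nu> \<and> l = (g \<nu> - p \<nu>) / (g \<nu> - f \<nu>))"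
        using lm unfolding L_def insert_iff mem_Collect_eq by blast
      then consider "l = 0" | \<nu>2 where "\<nu>2 \<in> Pf" "f \<nu>2 < g \<nu>2" "l = (g \<nu>2 - p \<nu>2) / (g \<nu>2 - f \<nu>2)"
        by blast
      then show "l \<le> (p \<nu>1 - g \<nu>1) / (f \<nu>1 - g \<nu>1)"
      proof cases
        case 1
        have "g \<nu>1 \<le> p \<nu>1" using disj[OF n1] gf by linarith
        then show ?thesis using 1 gf by simp
      next
        case 2
        have k: "(g \<nu>2 - f \<nu>2) * g \<nu>1 + (f \<nu>1 - g \<nu>1) * g \<nu>2
            \<le> (g \<nu>2 - f \<nu>2) * p \<nu>1 + (f \<nu>1 - g \<nu>1) * p \<nu>2"
          using key[OF n1 2(1) refl _ refl] gf 2(2) by simp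
        define A where "A = f \<nu>1 - g \<nu>1"
        define B where "B = g \<nu>2 - f \<nu>2"
        have A: "A > 0" and B: "B > 0" unfolding A_def B_def using gf 2(2) by auto
        have m: "A * (g \<nu>2 - p \<nu>2) \<le> B * (p \<nu>1 - g \<nu>1)"
          using k unfolding A_def B_def by (simp add: algebra_simps)
        have "((g \<nu>2 - p \<nu>2) / B) * A = (A * (g \<nu>2 - p \<nu>2)) / B" by simp
        also have "\<dots> \<le> (B * (p \<nu>1 - g \<nu>1)) / B" using m B by (intro divide_right_mono) auto
        also have "\<dots> = p \<nu>1 - g \<nu>1" using B by simp
        finally have "((g \<nu>2 - p \<nu>2) / B) * A \<le> p \<nu>1 - g \<nu>1" .
        then have "(g \<nu>2 - p \<nu>2) / B \<le> (p \<nu>1 - g \<nu>1) / A"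
          using pos_le_divide_eq[OF A] by blast
        then have "(g \<nu>2 - p \<nu>2) / (g \<nu>2 - f \<nu>2) \<le> (p \<nu>1 - g \<nu>1) / (f \<nu>1 - g \<nu>1)"
          unfolding A_def B_def .
        then show ?thesis using 2 by simp
      qed
    qed simp
    show ?thesis
    proof (intro exI[of _ t] conjI t0 t1 ballI)
      fix \<nu> assume nP: "\<nu> \<in> P"
      show "ennreal t * \<nu> x1 + ennreal (1 - t) * \<nu> x2 \<le> \<phi> \<nu>"
      proof (cases "\<phi> \<nu> < top")
        case False
        then have "\<phi> \<nu> = top" by (metis less_top)
        then show ?thesis by simp
      next
        case True
        then have n: "\<nu> \<in> Pf" using nP unfolding Pf_def by simp
        have real: "t * f \<nu> + (1 - t) * g \<nu> \<le> p \<nu>"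
        proof (cases "f \<nu>" "g \<nu>" rule: linorder_cases)
          case less
          then have "(g \<nu> - p \<nu>) / (g \<nu> - f \<nu>) \<in> L" unfolding L_def using n by blast
          then have "(g \<nu> - p \<nu>) / (g \<nu> - f \<nu>) \<le> t" using tl by blast
          moreover have "0 < g \<nu> - f \<nu>" using less by simp
          ultimately have "g \<nu> - p \<nu> \<le> t * (g \<nu> - f \<nu>)" using pos_divide_le_eq by blast
          then show ?thesis by (simp add: algebra_simps)
        next
          case equal
          then show ?thesis using disj[OF n] by (simp add: algebra_simps)
        next
          case greater
          have "t \<le> (p \<nu> - g \<nu>) / (f \<nu> - g \<nu>)" using tu[OF n greater] .
          moreover have "0 < f \<nu> - g \<nu>" using greater by simp
          ultimately have "t * (f \<nu> - g \<nu>) \<le> p \<nu> - g \<nu>" using pos_le_divide_eq by blast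
          then show ?thesis by (simp add: algebra_simps)
        qed
        have "ennreal t * \<nu> x1 + ennreal (1 - t) * \<nu> x2 = ennreal (t * f \<nu> + (1 - t) * g \<nu>)"
          using fe[OF n] t0 t1 by (simp add: ennreal_plus ennreal_mult)
        also have "\<dots> \<le> \<phi> \<nu>" using real fe[OF n] by (simp add: ennreal_leI)
        finally show ?thesis .
      qed
    qed
  qed
qed



lemma conv_strict:
  assumes t: "0 \<le> t" "t \<le> 1" and a: "ennreal r < a" and b: "ennreal r < b" and r: "r \<ge> 0"
  shows "ennreal r < ennreal t * a + ennreal (1-t) * b"
proof (cases "t > 0")
  case True
  have "ennreal t + ennreal (1-t) = 1" using t by (simp add: ennreal_plus[symmetric] del: ennreal_plus)
  then have eq: "ennreal r = ennreal t * ennreal r + ennreal (1-t) * ennreal r"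
    by (simp add: distrib_right[symmetric])
  have "ennreal t * ennreal r < ennreal t * a"
    using True a by (intro ennreal_mult_strict_left_mono) auto
  moreover have "ennreal (1-t) * ennreal r \<le> ennreal (1-t) * b"
    using b by (intro mult_left_mono) auto
  moreover have cf: "ennreal (1-t) * ennreal r \<noteq> top" by (simp add: ennreal_mult_eq_top_iff)
  ultimately have "ennreal (1-t) * ennreal r + ennreal t * ennreal r < ennreal (1-t) * ennreal r + ennreal t * a"
    using ennreal_add_left_cancel_less by (simp add: infinity_ennreal_def)
  also have "\<dots> \<le> ennreal (1-t) * b + ennreal t * a"
    using \<open>ennreal (1-t) * ennreal r \<le> ennreal (1-t) * b\<close> by (rule add_right_mono)
  finally have "ennreal t * ennreal r + ennreal (1-t) * ennreal r < ennreal t * a + ennreal (1-t) * b"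
    by (simp add: add.commute)
  then show ?thesis using eq by simp
next
  case False
  then have "t = 0" using t by simp
  then show ?thesis using b by simp
qed

lemma Mn:
  assumes sub: "is_subcone add zero sm C0" and muD: "\<mu> \<in> dual_cone add sm le" and r: "r \<ge> 0"
  shows "finite Y \<Longrightarrow> Y \<noteq> {} \<Longrightarrow> Y \<subseteq> C0 \<Longrightarrow> (\<forall>y\<in>Y. ennreal r < \<mu> y) \<Longrightarrow> conv_cone P \<Longrightarrow>
    subl P \<phi> \<Longrightarrow> P \<subseteq> dual_cone add sm le \<Longrightarrow> (\<forall>\<nu>\<in>P. \<exists>y\<in>Y. \<nu> y \<le> \<phi> \<nu>) \<Longrightarrow>
    \<exists>x\<in>C0. ennreal r < \<mu> x \<and> (\<forall>\<nu>\<in>P. \<nu> x \<le> \<phi> \<nu>)"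
proof (induction Y arbitrary: P rule: finite_ne_induct)
  case (singleton y)
  have yC: "y \<in> C0" using singleton.prems(1) by simp
  have ymu: "ennreal r < \<mu> y" using singleton.prems(2) by simp
  have "\<forall>\<nu>\<in>P. \<nu> y \<le> \<phi> \<nu>"
  proof
    fix \<nu> assume "\<nu> \<in> P"
    then obtain y' where "y' \<in> {y}" "\<nu> y' \<le> \<phi> \<nu>" using singleton.prems(6) by blast
    then show "\<nu> y \<le> \<phi> \<nu>" by simp
  qed
  then show ?case using yC ymu by blast
next
  case (insert g Y)
  define K where "K = {\<nu>\<in>P. \<phi> \<nu> < \<nu> g}"
  have ccK: "conv_cone K" unfolding conv_cone_def
  proof (intro conjI ballI allI impI)
    fix \<nu>1 \<nu>2 assume "\<nu>1 \<in> K" "\<nu>2 \<in> K"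
    then have h: "\<nu>1 \<in> P" "\<nu>2 \<in> P" "\<phi> \<nu>1 < \<nu>1 g" "\<phi> \<nu>2 < \<nu>2 g" unfolding K_def by auto
    have "\<phi> (\<lambda>x. \<nu>1 x + \<nu>2 x) \<le> \<phi> \<nu>1 + \<phi> \<nu>2" using sl_add[OF insert.prems(4) h(1,2)] .
    also have "\<dots> < \<nu>1 g + \<nu>2 g" using ennreal_add_strict[OF h(3,4)] .
    finally show "(\<lambda>x. \<nu>1 x + \<nu>2 x) \<in> K" unfolding K_def using cc_add[OF insert.prems(3) h(1,2)] by simp
  next
    fix \<nu> and c :: real assume "\<nu> \<in> K" "c > 0"
    then have h: "\<nu> \<in> P" "\<phi> \<nu> < \<nu> g" unfolding K_def by auto
    have "\<phi> (\<lambda>x. ennreal c * \<nu> x) = ennreal c * \<phi> \<nu>" using sl_scale[OF insert.prems(4) h(1) \<open>c>0\<close>] .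
    also have "\<dots> < ennreal c * \<nu> g" using h(2) \<open>c>0\<close> by (intro ennreal_mult_strict_left_mono) auto
    finally show "(\<lambda>x. ennreal c * \<nu> x) \<in> K" unfolding K_def using cc_scale[OF insert.prems(3) h(1) \<open>c>0\<close>] by simp
  qed
  have KP: "K \<subseteq> P" unfolding K_def by (rule Collect_restrict)
  have slK: "subl K \<phi>" by (rule subl_subset[OF insert.prems(4) KP])
  have KD: "K \<subseteq> dual_cone add sm le" by (rule subset_trans[OF KP insert.prems(5)])
  have KY: "\<forall>\<nu>\<in>K. \<exists>y\<in>Y. \<nu> y \<le> \<phi> \<nu>"
  proof
    fix \<nu> assume "\<nu> \<in> K"
    then have "\<nu> \<in> P" "\<phi> \<nu> < \<nu> g" unfolding K_def by auto
    then obtain y where y: "y \<in> insert g Y" "\<nu> y \<le> \<phi> \<nu>" using insert.prems(6) by blast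
    have "y \<noteq> g"
    proof
      assume "y = g"
      then have "\<nu> g \<le> \<phi> \<nu>" using y(2) by simp
      then show False using leD \<open>\<phi> \<nu> < \<nu> g\<close> by auto
    qed
    then show "\<exists>y\<in>Y. \<nu> y \<le> \<phi> \<nu>" using y by blast
  qed
  have YC: "Y \<subseteq> C0" and Ymu: "\<forall>y\<in>Y. ennreal r < \<mu> y" using insert.prems(1,2) by auto
  obtain x' where x': "x' \<in> C0" "ennreal r < \<mu> x'" "\<forall>\<nu>\<in>K. \<nu> x' \<le> \<phi> \<nu>"
    using insert.IH[OF YC Ymu ccK slK KD KY] by blast
  have mn: "\<forall>\<nu>\<in>P. min (\<nu> x') (\<nu> g) \<le> \<phi> \<nu>"
  proof
    fix \<nu> assume nP: "\<nu> \<in> P"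
    show "min (\<nu> x') (\<nu> g) \<le> \<phi> \<nu>"
    proof (cases "\<nu> \<in> K")
      case True
      then show ?thesis using x'(3) min.coboundedI1 by blast
    next
      case False
      then have "\<nu> g \<le> \<phi> \<nu>" using nP unfolding K_def by auto
      then show ?thesis using min.coboundedI2 by blast
    qed
  qed
  obtain t where t: "0 \<le> t" "t \<le> 1" "\<forall>\<nu>\<in>P. ennreal t * \<nu> x' + ennreal (1-t) * \<nu> g \<le> \<phi> \<nu>"
    using M2[OF insert.prems(3,4) mn] by blast
  define x where "x = add (sm t x') (sm (1-t) g)"
  have gC: "g \<in> C0" using insert.prems(1) by simp
  have smC: "sm c z \<in> C0" if "c \<ge> 0" "z \<in> C0" for c z using sub that unfolding is_subcone_def by blast
  have adC: "add z w \<in> C0" if "z \<in> C0" "w \<in> C0" for z w using sub that unfolding is_subcone_def by blast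
  have xC: "x \<in> C0" unfolding x_def using t by (intro adC smC x'(1) gC) auto
  have ev: "\<nu> x = ennreal t * \<nu> x' + ennreal (1-t) * \<nu> g" if "\<nu> \<in> dual_cone add sm le" for \<nu>
    unfolding x_def using dual_lin[OF that] t by simp
  have "ennreal r < \<mu> g" using insert.prems(2) by simp
  then have "ennreal r < \<mu> x" using ev[OF muD] conv_strict[OF t(1,2) x'(2) _ r] by simp
  moreover have "\<forall>\<nu>\<in>P. \<nu> x \<le> \<phi> \<nu>"
  proof
    fix \<nu> assume nP: "\<nu> \<in> P"
    then have "\<nu> \<in> dual_cone add sm le" using insert.prems(5) by blast
    then have "\<nu> x = ennreal t * \<nu> x' + ennreal (1-t) * \<nu> g" by (rule ev)
    then show "\<nu> x \<le> \<phi> \<nu>" using t(3) nP by simp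
  qed
  ultimately show ?case using xC by blast
qed



theorem corollary5p3:
  fixes add :: "'a \<Rightarrow> 'a \<Rightarrow> 'a" and zero :: 'a and sm :: "real \<Rightarrow> 'a \<Rightarrow> 'a"
    and le :: "'a \<Rightarrow> 'a \<Rightarrow> bool" and C0 :: "'a set"
    and \<phi> :: "('a \<Rightarrow> ennreal) \<Rightarrow> ennreal" and \<mu> :: "'a \<Rightarrow> ennreal"
  assumes "is_dcone add zero sm le"
    and "is_subcone add zero sm C0"
    and "d_dense add zero sm le C0"
    and "sublinear_on_dual add sm le \<phi>"
    and "continuous_map (weak_star_upper add sm le) upper_topology \<phi>"
    and "\<mu> \<in> dual_cone add sm le"
  shows "\<phi> \<mu> = Sup {\<mu> x | x. x \<in> C0 \<and> (\<forall>\<nu>\<in>dual_cone add sm le. \<nu> x \<le> \<phi> \<nu>)}"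
proof -
  let ?D = "dual_cone add sm le"
  have cone: "is_cone add zero sm" and dc: "dcpo le" using assms(1) unfolding is_dcone_def by auto
  have muD: "\<mu> \<in> ?D" using assms(6) .
  have hom: "\<phi> (\<lambda>x. ennreal c * \<nu> x) = ennreal c * \<phi> \<nu>" if "\<nu> \<in> ?D" "c \<ge> 0" for \<nu> c
    using assms(4) that unfolding sublinear_on_dual_def by blast
  have sad: "\<phi> (\<lambda>x. \<nu>1 x + \<nu>2 x) \<le> \<phi> \<nu>1 + \<phi> \<nu>2" if "\<nu>1 \<in> ?D" "\<nu>2 \<in> ?D" for \<nu>1 \<nu>2
    using assms(4) that unfolding sublinear_on_dual_def by blast
  have ccD: "conv_cone ?D" unfolding conv_cone_def
  proof (intro conjI ballI allI impI)
    fix \<nu>1 \<nu>2 assume "\<nu>1 \<in> ?D" "\<nu>2 \<in> ?D"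
    then show "(\<lambda>x. \<nu>1 x + \<nu>2 x) \<in> ?D" by (rule D_add)
  next
    fix \<nu> and c :: real assume "\<nu> \<in> ?D" "c > 0"
    then show "(\<lambda>x. ennreal c * \<nu> x) \<in> ?D" by (intro D_scale) auto
  qed
  have slD: "subl ?D \<phi>" unfolding subl_def
  proof (intro conjI ballI allI impI)
    fix \<nu>1 \<nu>2 assume "\<nu>1 \<in> ?D" "\<nu>2 \<in> ?D"
    then show "\<phi> (\<lambda>x. \<nu>1 x + \<nu>2 x) \<le> \<phi> \<nu>1 + \<phi> \<nu>2" by (rule sad)
  next
    fix \<nu> and c :: real assume "\<nu> \<in> ?D" "c > 0"
    then show "\<phi> (\<lambda>x. ennreal c * \<nu> x) = ennreal c * \<phi> \<nu>" by (intro hom) auto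
  qed
  define T where "T = Sup {\<mu> x | x. x \<in> C0 \<and> (\<forall>\<nu>\<in>?D. \<nu> x \<le> \<phi> \<nu>)}"
  have le1: "T \<le> \<phi> \<mu>" unfolding T_def using muD by (intro Sup_least) auto
  have le2: "\<phi> \<mu> \<le> T"
  proof (rule ccontr)
    assume "\<not> \<phi> \<mu> \<le> T" then have "T < \<phi> \<mu>" by simp
    then obtain z where z: "T < z" "z < \<phi> \<mu>" using dense[of T "\<phi> \<mu>"] by blast
    have "z < top" using less_le_trans[OF z(2) top_greatest] .
    then obtain r0 where r0: "z = ennreal r0" "r0 \<ge> 0" by (rule fin_cases)
    have "0 < z" using le_less_trans[OF zero_le z(1)] .
    then have r0pos: "r0 > 0" using r0 by simp
    define U where "U = {\<nu>\<in>?D. ennreal r0 < \<phi> \<nu>}"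
    have topW: "topspace (weak_star_upper add sm le) = ?D"
      unfolding weak_star_upper_def topology_generated_by_topspace by blast
    have "openin upper_topology {ennreal r0<..}"
      unfolding upper_topology_def openin_topology_generated_by_iff
      using r0 by (intro generate_topology_on.Basis) blast
    then have "openin (weak_star_upper add sm le)
        {\<nu> \<in> topspace (weak_star_upper add sm le). \<phi> \<nu> \<in> {ennreal r0<..}}"
      using assms(5) openin_continuous_map_preimage by blast
    then have opU: "openin (weak_star_upper add sm le) U" unfolding U_def topW by simp
    have "\<mu> \<in> U" unfolding U_def using muD z r0 by simp
    then obtain F where F: "finite F" "\<forall>p\<in>F. fst p \<in> C0 \<and> snd p \<ge> 0" "\<mu> \<in> nbhd ?D F" "nbhd ?D F \<subseteq> U"
      using goodsetD[OF good_open[OF cone dc assms(2) assms(3) opU]] by blast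
    have Fne: "F \<noteq> {}"
    proof
      assume "F = {}"
      define z0 where "z0 = (\<lambda>x. ennreal 0 * \<mu> x)"
      have "z0 \<in> ?D" unfolding z0_def using D_scale[OF muD, of 0] by simp
      then have "z0 \<in> nbhd ?D F" using \<open>F={}\<close> unfolding nbhd_def by simp
      then have "ennreal r0 < \<phi> z0" using F(4) unfolding U_def by blast
      moreover have "\<phi> z0 = 0" unfolding z0_def using hom[OF muD, of 0] by simp
      ultimately show False by simp
    qed
    have "\<forall>p\<in>F. \<exists>q. snd p < q \<and> 0 < q \<and> ennreal q < \<mu> (fst p)"
    proof
      fix p assume pF: "p \<in> F"
      then have h: "snd p \<ge> 0" "ennreal (snd p) < \<mu> (fst p)" using F(2,3) unfolding nbhd_def by auto
      then obtain w where w: "ennreal (snd p) < w" "w < \<mu> (fst p)" using dense[of "ennreal (snd p)" "\<mu> (fst p)"] by blast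
      then have "w < top" using less_le_trans[OF w(2) top_greatest] by simp
      then obtain q where q: "w = ennreal q" "q \<ge> 0" by (rule fin_cases)
      have "snd p < q" using w(1) q h(1) by (simp add: ennreal_less_iff)
      then show "\<exists>q. snd p < q \<and> 0 < q \<and> ennreal q < \<mu> (fst p)"
        using h(1) q w(2) by (intro exI[of _ q]) auto
    qed
    from bchoice[OF this] obtain q where q: "\<forall>p\<in>F. snd p < q p \<and> 0 < q p \<and> ennreal (q p) < \<mu> (fst p)" by blast
    define Y where "Y = (\<lambda>p. sm (r0 / q p) (fst p)) ` F"
    have Yfin: "finite Y" "Y \<noteq> {}" using F(1) Fne unfolding Y_def by auto
    have YC: "Y \<subseteq> C0"
    proof
      fix y assume "y \<in> Y"
      then obtain p where p: "p \<in> F" "y = sm (r0 / q p) (fst p)" unfolding Y_def by blast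
      have "r0 / q p \<ge> 0" using q p(1) r0 by auto
      then show "y \<in> C0" using p F(2) assms(2) unfolding is_subcone_def by auto
    qed
    have evY: "ennreal r0 < \<nu> (sm (r0 / q p) (fst p)) \<longleftrightarrow> ennreal (q p) < \<nu> (fst p)"
      if nD: "\<nu> \<in> ?D" and pF: "p \<in> F" for \<nu> p
    proof -
      have qp: "q p > 0" using q pF by auto
      have s: "r0 / q p > 0" using r0pos qp by simp
      have "\<nu> (sm (r0 / q p) (fst p)) = ennreal (r0 / q p) * \<nu> (fst p)"
        using dual_lin(2)[OF nD] s by simp
      moreover have "r0 / (r0 / q p) = q p" using r0pos qp by simp
      ultimately show ?thesis using ennreal_less_mult_iff[OF s r0(2), of "\<nu> (fst p)"] by simp
    qed
    have Ymu: "\<forall>y\<in>Y. ennreal r0 < \<mu> y" unfolding Y_def using evY[OF muD] q by auto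
    have Ynb: "ennreal r0 < \<phi> \<nu>" if nD: "\<nu> \<in> ?D" and all: "\<forall>y\<in>Y. ennreal r0 < \<nu> y" for \<nu>
    proof -
      have "\<nu> \<in> nbhd ?D F" unfolding nbhd_def
      proof (intro CollectI conjI ballI nD)
        fix p assume pF: "p \<in> F"
        then have "ennreal (q p) < \<nu> (fst p)" using all evY[OF nD pF] unfolding Y_def by auto
        moreover have "ennreal (snd p) \<le> ennreal (q p)" using q pF by (auto intro: ennreal_leI)
        ultimately show "ennreal (snd p) < \<nu> (fst p)" by (rule le_less_trans[rotated])
      qed
      then show ?thesis using F(4) unfolding U_def by blast
    qed
    have cover: "\<forall>\<nu>\<in>?D. \<exists>y\<in>Y. \<nu> y \<le> \<phi> \<nu>"
    proof (rule ballI, rule ccontr)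
      fix \<nu> assume nD: "\<nu> \<in> ?D" and "\<not> (\<exists>y\<in>Y. \<nu> y \<le> \<phi> \<nu>)"
      then have gt: "\<forall>y\<in>Y. \<phi> \<nu> < \<nu> y" by auto
      define m where "m = Min (\<nu> ` Y)"
      have "m \<in> \<nu> ` Y" unfolding m_def using Yfin by (intro Min_in) auto
      then have pm: "\<phi> \<nu> < m" using gt by auto
      have mle: "m \<le> \<nu> y" if "y \<in> Y" for y unfolding m_def using Yfin that by (intro Min_le) auto
      obtain w where w: "\<phi> \<nu> < w" "w < m" using dense[OF pm] by blast
      have "w < top" using less_le_trans[OF w(2) top_greatest] .
      then obtain q' where q': "w = ennreal q'" "q' \<ge> 0" by (rule fin_cases)
      have "0 < w" using le_less_trans[OF zero_le w(1)] .
      then have q'pos: "q' > 0" using q' by simp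
      define c where "c = r0 / q'"
      have cpos: "c > 0" unfolding c_def using r0pos q'pos by simp
      define \<nu>' where "\<nu>' = (\<lambda>x. ennreal c * \<nu> x)"
      have n'D: "\<nu>' \<in> ?D" unfolding \<nu>'_def using D_scale[OF nD, of c] cpos by simp
      have "\<forall>y\<in>Y. ennreal r0 < \<nu>' y"
      proof
        fix y assume "y \<in> Y"
        then have "w < \<nu> y" using less_le_trans[OF w(2) mle] by blast
        then have "ennreal q' < \<nu> y" using q'(1) by simp
        moreover have "r0 / c = q'" unfolding c_def using r0pos q'pos by simp
        ultimately show "ennreal r0 < \<nu>' y" unfolding \<nu>'_def using ennreal_less_mult_iff[OF cpos r0(2)] by simp
      qed
      then have "ennreal r0 < \<phi> \<nu>'" using Ynb[OF n'D] by blast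
      moreover have "\<phi> \<nu>' = ennreal c * \<phi> \<nu>" unfolding \<nu>'_def using hom[OF nD] cpos by simp
      moreover have "ennreal c * \<phi> \<nu> \<le> ennreal c * ennreal q'"
        using w(1) q'(1) by (intro mult_left_mono) auto
      moreover have "ennreal c * ennreal q' = ennreal (c * q')" using cpos q'(2) by (simp add: ennreal_mult)
      moreover have "c * q' = r0" unfolding c_def using q'pos by simp
      ultimately show False by simp
    qed
    obtain x where x: "x \<in> C0" "ennreal r0 < \<mu> x" "\<forall>\<nu>\<in>?D. \<nu> x \<le> \<phi> \<nu>"
      using Mn[OF assms(2) muD r0(2) Yfin YC Ymu ccD slD subset_refl cover] by blast
    have "\<mu> x \<le> T" unfolding T_def using x by (intro Sup_upper) blast
    then show False using x(2) z(1) r0(1) by simp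
  qed
  show ?thesis using antisym[OF le2 le1] unfolding T_def .
qed


end
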